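(* Let $(\mathcal{M},g,\nabla,\nabla^* )$ be a dually flat manifold with $\nabla$-affine coordinates $\theta$, $\nabla^*$-affine coordinates $\eta$ and potentials $\psi,\varphi$. Let $\mathcal{S}\subset\mathcal{M}$ be an $m$-dimensional $\nabla$-auto-parallel submanifold, endowed with the induced dually flat structure, and let $(u_a)_{1\le a\le m}$ be $\nabla$-affine coordinates on $\mathcal{S}$. Fix $q\in\mathcal{M}\setminus\mathcal{S}$ and consider the $\nabla^*$-projection problem $\min_{p\in\mathcal{S}} D(p\|q)$, i.e. minimization of $f(u)=\psi(\theta(u))+\varphi(\eta^q)-\sum_{i=1}^n\theta_i(u)\eta^q_i$. Then, in the coordinates $u$, each iteration of the coordinate-based dual Riemannian Newton method applied to $f$ on $\mathcal{S}$ coincides with the iteration of the coordinate-based natural gradient method (with step size $s=1$); that is, both methods produce the update $u\gets u-\mathbf{G}(u)^{-1}\boldsymbol{\nabla}f(u)$.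
   Context: Dually flat manifold: a Riemannian manifold $(\mathcal{M},g)$ with torsion-free affine connections $\nabla,\nabla^*$ that are dual w.r.t. $g$ ($X\langle Y,Z\rangle=\langle\nabla_XY,Z\rangle+\langle Y,\nabla^*_XZ\rangle$) and whose curvature tensors both vanish. Coordinates are $\nabla$-affine if the Christoffel symbols of $\nabla$ vanish in them. On such a manifold there exist $\nabla$-affine coordinates $\theta$, $\nabla^*$-affine coordinates $\eta$ and smooth strictly convex potentials $\psi(\theta)$, $\varphi(\eta)$ with $\eta_i=\partial\psi/\partial\theta_i$, $\theta_i=\partial\varphi/\partial\eta_i$, $g_{ij}(\theta)=\partial^2\psi/\partial\theta_i\partial\theta_j$, $\psi(\theta)+\varphi(\eta)=\sum_i\theta_i\eta_i$. The $\nabla$-divergence is $D(p\|q)=\psi(\theta^p)+\varphi(\eta^q)-\sum_i\theta^p_i\eta^q_i$. A submanifold $\mathcal{S}$ is $\nabla$-auto-parallel if $\nabla_XY$ is tangent to $\mathcal{S}$ for all vector fields $X,Y$ tangent to $\mathcal{S}$; equivalently there are a constant rank-$m$ matrix $\mathbf{A}\in\mathbb{R}^{n\times m}$, a constant $\mathbf{b}\in\mathbb{R}^n$ and $\nabla$-affine coordinates $u$ on $\mathcal{S}$ with $\theta=\mathbf{A}u+\mathbf{b}$; with the induced metric, the restricted connection $\nabla$ and its dual, $\mathcal{S}$ is itself dually flat. For a manifold with dual connections $(\nabla,\nabla^* )$, a chart $\xi$, metric matrix $\mathbf{G}(\xi)$, coordinate gradient $\boldsymbol{\nabla}f(\xi)$,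 $a=\mathbf{G}^{-1}\boldsymbol{\nabla}f$, Christoffel symbols $\Gamma^k_{ij}$ of $\nabla$ and $\Gamma^{*}_{ij}{}^k$ of $\nabla^*$ (defined by $\nabla_{\partial_i}\partial_j=\sum_k\Gamma^k_{ij}\partial_k$, etc.), and $\mathbf{H}^*_{ij}=\partial a_j/\partial\xi_i+\sum_k a_k\Gamma^{*}_{ik}{}^j$: the coordinate-based dual Riemannian Newton method iterates: solve $\mathbf{H}^{*\top}(\xi)\boldsymbol{\beta}=-\mathbf{G}^{-1}(\xi)\boldsymbol{\nabla}f(\xi)$, then set $\xi_i\gets\xi_i+\beta_i-\tfrac12\sum_{j,k}\Gamma^i_{jk}(\xi)\beta_j\beta_k$. The coordinate-based natural gradient method with step size $s>0$ iterates $\xi\gets\xi-s\,\mathbf{G}^{-1}(\xi)\boldsymbol{\nabla}f(\xi)$. *)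

theory Defs
  imports "HOL-Analysis.Analysis"
begin

text \<open>Coordinates are Cartesian vectors: a point of an n-dimensional chart is a
  vector of type real^'n.  Partial derivatives are taken via the Frechet derivative.\<close>

definition pderiv :: "(real^'k \<Rightarrow> real) \<Rightarrow> 'k \<Rightarrow> real^'k \<Rightarrow> real" where
  "pderiv F i x = frechet_derivative F (at x) (axis i 1)"

text \<open>Iterated partial derivatives (innermost index last in the list).\<close>
fun ipd :: "'k list \<Rightarrow> (real^'k \<Rightarrow> real) \<Rightarrow> real^'k \<Rightarrow> real" where
  "ipd [] F = F"
| "ipd (i # is) F = pderiv (ipd is F) i"

definition smooth_on :: "(real^'k) set \<Rightarrow> (real^'k \<Rightarrow> real) \<Rightarrow> bool" where
  "smooth_on S F \<longleftrightarrow> (\<forall>is. \<forall>x\<in>S. ipd is F differentiable (at x))"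

definition coord_grad :: "(real^'k \<Rightarrow> real) \<Rightarrow> real^'k \<Rightarrow> real^'k" where
  "coord_grad F x = (\<chi> i. pderiv F i x)"

definition hess :: "(real^'k \<Rightarrow> real) \<Rightarrow> real^'k \<Rightarrow> real^'k^'k" where
  "hess F x = (\<chi> i j. pderiv (pderiv F j) i x)"

definition strictly_convex_on :: "(real^'k) set \<Rightarrow> (real^'k \<Rightarrow> real) \<Rightarrow> bool" where
  "strictly_convex_on S F \<longleftrightarrow>
     (\<forall>x\<in>S. \<forall>y\<in>S. \<forall>t. x \<noteq> y \<and> 0 < t \<and> t < 1 \<longrightarrow>
        F ((1 - t) *\<^sub>R x + t *\<^sub>R y) < (1 - t) * F x + t * F y)"

definition pos_def :: "real^'k^'k \<Rightarrow> bool" where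
  "pos_def M \<longleftrightarrow> (\<forall>v. v \<noteq> 0 \<longrightarrow> v \<bullet> (M *v v) > 0)"

text \<open>Coordinate-based dual Riemannian Newton method, for a chart with metric
  matrix G, coordinate gradient gradf, Christoffel symbols Gam of nabla
  (Gam x i j k = Gamma^k_{ij}) and GamD of nabla^* (GamD x i j k = Gamma^*_{ij}^k).\<close>

definition newton_a :: "(real^'k \<Rightarrow> real^'k^'k) \<Rightarrow> (real^'k \<Rightarrow> real^'k) \<Rightarrow> real^'k \<Rightarrow> real^'k" where
  "newton_a G gradf x = matrix_inv (G x) *v gradf x"

definition dual_newton_H ::
  "(real^'k \<Rightarrow> real^'k^'k) \<Rightarrow> (real^'k \<Rightarrow> real^'k) \<Rightarrow> (real^'k \<Rightarrow> 'k \<Rightarrow> 'k \<Rightarrow> 'k \<Rightarrow> real)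
    \<Rightarrow> real^'k \<Rightarrow> real^'k^'k" where
  "dual_newton_H G gradf GamD x =
     (\<chi> i j. pderiv (\<lambda>y. newton_a G gradf y $ j) i x
            + (\<Sum>k\<in>UNIV. newton_a G gradf x $ k * GamD x i k j))"

definition dual_newton_eq ::
  "(real^'k \<Rightarrow> real^'k^'k) \<Rightarrow> (real^'k \<Rightarrow> real^'k) \<Rightarrow> (real^'k \<Rightarrow> 'k \<Rightarrow> 'k \<Rightarrow> 'k \<Rightarrow> real)
    \<Rightarrow> real^'k \<Rightarrow> real^'k \<Rightarrow> bool" where
  "dual_newton_eq G gradf GamD x \<beta> \<longleftrightarrow>
     transpose (dual_newton_H G gradf GamD x) *v \<beta> = - (matrix_inv (G x) *v gradf x)"

definition dual_newton_update ::
  "(real^'k \<Rightarrow> 'k \<Rightarrow> 'k \<Rightarrow> 'k \<Rightarrow> real) \<Rightarrow> real^'k \<Rightarrow> real^'k \<Rightarrow> real^'k" where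
  "dual_newton_update Gam x \<beta> =
     (\<chi> i. x $ i + \<beta> $ i - 1/2 * (\<Sum>j\<in>UNIV. \<Sum>k\<in>UNIV. Gam x j k i * \<beta> $ j * \<beta> $ k))"

definition nat_grad_update ::
  "(real^'k \<Rightarrow> real^'k^'k) \<Rightarrow> (real^'k \<Rightarrow> real^'k) \<Rightarrow> real \<Rightarrow> real^'k \<Rightarrow> real^'k" where
  "nat_grad_update G gradf s x = x - s *\<^sub>R (matrix_inv (G x) *v gradf x)"

end

theory Submission
  imports Defs
begin

lemma minv:
  fixes M :: "real^'k^'k"
  assumes "invertible M"
  shows "M ** matrix_inv M = mat 1" "matrix_inv M ** M = mat 1"
  using someI_ex[OF assms[unfolded invertible_def]] unfolding matrix_inv_def by auto

lemma pderiv_has: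
  assumes "(F has_derivative F') (at x)"
  shows "pderiv F i x = F' (axis i 1)"
  unfolding pderiv_def using frechet_derivative_at[OF assms] by simp

lemma linear_expand:
  fixes L :: "real^'k \<Rightarrow> real"
  assumes "linear L"
  shows "L h = (\<Sum>p\<in>UNIV. h$p * L (axis p 1))"
proof -
  have "h = (\<Sum>p\<in>UNIV. h$p *\<^sub>R axis p 1)"
    by (simp add: vec_eq_iff axis_def if_distrib cong: if_cong)
  then have "L h = L (\<Sum>p\<in>UNIV. h$p *\<^sub>R axis p 1)" by simp
  also have "\<dots> = (\<Sum>p\<in>UNIV. h$p * L (axis p 1))"
    using assms by (simp add: linear_sum linear_scale)
  finally show ?thesis .
qed

lemma grad_has:
  fixes F :: "real^'k \<Rightarrow> real"
  assumes "F differentiable at x"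
  shows "(F has_derivative (\<lambda>h. \<Sum>p\<in>UNIV. h$p * pderiv F p x)) (at x)"
proof -
  have d: "(F has_derivative frechet_derivative F (at x)) (at x)"
    using assms frechet_derivative_works by blast
  have eq: "frechet_derivative F (at x) = (\<lambda>h. \<Sum>p\<in>UNIV. h$p * pderiv F p x)"
  proof (rule ext)
    fix h
    show "frechet_derivative F (at x) h = (\<Sum>p\<in>UNIV. h$p * pderiv F p x)"
      unfolding pderiv_def by (rule linear_expand[OF has_derivative_linear[OF d]])
  qed
  show ?thesis using d by (simp only: eq)
qed

lemma affine_has:
  fixes F :: "real^'k \<Rightarrow> real" and A :: "real^'m^'k"
  assumes "(F has_derivative (\<lambda>h. \<Sum>p\<in>UNIV. h$p * D p)) (at (A *v v + b))"
  shows "((\<lambda>v. F (A *v v + b)) has_derivative (\<lambda>h. \<Sum>p\<in>UNIV. (A *v h)$p * D p)) (at v)"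
proof -
  have a: "((\<lambda>v. A *v v + b) has_derivative (\<lambda>h. A *v h)) (at v)"
  proof -
    have "((*v) A has_derivative (*v) A) (at v)"
      by (rule bounded_linear_imp_has_derivative) simp
    then show ?thesis by (intro derivative_eq_intros) auto
  qed
  show ?thesis
    using diff_chain_at[OF a assms] by (simp add: o_def)
qed

lemma affine_pderiv:
  fixes F :: "real^'k \<Rightarrow> real" and A :: "real^'m^'k"
  assumes "(F has_derivative (\<lambda>h. \<Sum>p\<in>UNIV. h$p * D p)) (at (A *v v + b))"
  shows "pderiv (\<lambda>v. F (A *v v + b)) j v = (\<Sum>p\<in>UNIV. A$p$j * D p)"
  using pderiv_has[OF affine_has[OF assms]]
  by (simp add: matrix_vector_mult_basis column_def)

lemma affine_diff:
  fixes F :: "real^'k \<Rightarrow> real" and A :: "real^'m^'k"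
  assumes "F differentiable at (A *v v + b)"
  shows "(\<lambda>v. F (A *v v + b)) differentiable at v"
  using affine_has[OF grad_has[OF assms]] unfolding differentiable_def by blast

lemma local_pderiv:
  assumes "open S" "x \<in> S" "\<And>y. y \<in> S \<Longrightarrow> F y = G y"
  shows "pderiv F i x = pderiv G i x"
    and "F differentiable at x \<longleftrightarrow> G differentiable at x"
proof -
  have e: "(F has_derivative D) (at x) \<longleftrightarrow> (G has_derivative D) (at x)" for D
    using has_derivative_transform_within_open[OF _ assms(1,2)] assms(3) by metis
  show "pderiv F i x = pderiv G i x"
    unfolding pderiv_def frechet_derivative_def using e by simp
  show "F differentiable at x \<longleftrightarrow> G differentiable at x"
    unfolding differentiable_def using e by simp
qed

lemma pderiv_sum_mult:
  fixes X Y :: "'a \<Rightarrow> real^'k \<Rightarrow> real"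
  assumes "finite K" "\<And>k. X k differentiable at x" "\<And>k. Y k differentiable at x"
  shows "pderiv (\<lambda>v. \<Sum>k\<in>K. X k v * Y k v) i x
       = (\<Sum>k\<in>K. pderiv (X k) i x * Y k x + X k x * pderiv (Y k) i x)"
proof -
  have dx: "(X k has_derivative frechet_derivative (X k) (at x)) (at x)" for k
    using assms frechet_derivative_works by blast
  have dy: "(Y k has_derivative frechet_derivative (Y k) (at x)) (at x)" for k
    using assms frechet_derivative_works by blast
  have "((\<lambda>v. \<Sum>k\<in>K. X k v * Y k v) has_derivative
     (\<lambda>h. \<Sum>k\<in>K. X k x * frechet_derivative (Y k) (at x) h + frechet_derivative (X k) (at x) h * Y k x)) (at x)"
    by (intro has_derivative_sum has_derivative_mult dx dy)
  from pderiv_has[OF this] show ?thesis unfolding pderiv_def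
    by (simp add: algebra_simps)
qed

lemma det_diff:
  fixes M :: "real^'m \<Rightarrow> real^'k^'k"
  assumes "\<And>i j. (\<lambda>v. M v $ i $ j) differentiable at x"
  shows "(\<lambda>v. det (M v)) differentiable at x"
proof -
  have "(\<lambda>v. \<Prod>i\<in>UNIV. M v $ i $ p i) differentiable at x" for p :: "'k \<Rightarrow> 'k"
  proof -
    obtain D where D: "\<And>i j. ((\<lambda>v. M v $ i $ j) has_derivative D i j) (at x)"
      using assms unfolding differentiable_def by metis
    show ?thesis unfolding differentiable_def
      by (rule exI, rule has_derivative_prod, rule D)
  qed
  then show ?thesis unfolding det_def by (intro differentiable_sum differentiable_mult differentiable_const) auto
qed


lemma deriv_line:
  fixes F :: "real^'k \<Rightarrow> real"
  assumes "F differentiable at (y + t *\<^sub>R axis p 1)"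
  shows "((\<lambda>s. F (y + s *\<^sub>R axis p 1)) has_real_derivative pderiv F p (y + t *\<^sub>R axis p 1)) (at t)"
proof -
  let ?z = "y + t *\<^sub>R axis p 1"
  have d: "(F has_derivative frechet_derivative F (at ?z)) (at ?z)"
    using assms frechet_derivative_works by blast
  have l: "((\<lambda>s. y + s *\<^sub>R axis p (1::real)) has_derivative (\<lambda>s. s *\<^sub>R axis p 1)) (at t)"
    by (intro derivative_eq_intros) auto
  have c: "((\<lambda>s. F (y + s *\<^sub>R axis p 1)) has_derivative (\<lambda>s. frechet_derivative F (at ?z) (s *\<^sub>R axis p 1))) (at t)"
    using diff_chain_at[OF l d] by (simp add: o_def)
  have lin: "linear (frechet_derivative F (at ?z))" using has_derivative_linear[OF d] .
  have "(\<lambda>s. frechet_derivative F (at ?z) (s *\<^sub>R axis p 1)) = (*) (pderiv F p ?z)"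
    unfolding pderiv_def using linear_scale[OF lin] by (auto simp: mult.commute)
  with c show ?thesis unfolding has_field_derivative_def by simp
qed

lemma schwarz_aux:
  fixes F :: "real^'k \<Rightarrow> real"
  assumes h: "0 < h"
    and box: "\<And>s t. 0 \<le> s \<Longrightarrow> s \<le> h \<Longrightarrow> 0 \<le> t \<Longrightarrow> t \<le> h \<Longrightarrow> x + s *\<^sub>R axis p 1 + t *\<^sub>R axis q 1 \<in> S"
    and dF: "\<And>y. y \<in> S \<Longrightarrow> F differentiable at y"
    and dFp: "\<And>y. y \<in> S \<Longrightarrow> pderiv F p differentiable at y"
  shows "\<exists>s t. 0 < s \<and> s < h \<and> 0 < t \<and> t < h \<and>
     F (x + h *\<^sub>R axis p 1 + h *\<^sub>R axis q 1) - F (x + h *\<^sub>R axis q 1) - F (x + h *\<^sub>R axis p 1) + F x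
       = h * h * pderiv (pderiv F p) q (x + s *\<^sub>R axis p 1 + t *\<^sub>R axis q 1)"
proof -
  define ep where "ep = axis p (1::real)"
  define eq where "eq = axis q (1::real)"
  have box': "x + s *\<^sub>R ep + t *\<^sub>R eq \<in> S" if "0 \<le> s" "s \<le> h" "0 \<le> t" "t \<le> h" for s t
    using box that unfolding ep_def eq_def by blast
  define g where "g t = F ((x + h *\<^sub>R eq) + t *\<^sub>R ep) - F (x + t *\<^sub>R ep)" for t
  have gd: "(g has_real_derivative (pderiv F p ((x + h *\<^sub>R eq) + t *\<^sub>R ep) - pderiv F p (x + t *\<^sub>R ep))) (at t)"
    if "0 \<le> t" "t \<le> h" for t
  proof -
    have m1: "(x + h *\<^sub>R eq) + t *\<^sub>R ep \<in> S" using box'[of t h] that h by (simp add: add_ac)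
    have m2: "x + t *\<^sub>R ep \<in> S" using box'[of t 0] that h by simp
    show ?thesis unfolding g_def ep_def
      by (intro derivative_intros deriv_line dF m1[unfolded ep_def] m2[unfolded ep_def])
  qed
  obtain t1 where t1: "0 < t1" "t1 < h"
    and e1: "g h - g 0 = (h - 0) * (pderiv F p ((x + h *\<^sub>R eq) + t1 *\<^sub>R ep) - pderiv F p (x + t1 *\<^sub>R ep))"
    using MVT2[OF h gd] by blast
  define k where "k s = pderiv F p ((x + t1 *\<^sub>R ep) + s *\<^sub>R eq)" for s
  have kd: "(k has_real_derivative pderiv (pderiv F p) q ((x + t1 *\<^sub>R ep) + s *\<^sub>R eq)) (at s)"
    if "0 \<le> s" "s \<le> h" for s
    unfolding k_def eq_def
    using deriv_line[OF dFp, of "x + t1 *\<^sub>R ep" s q] box'[of t1 s] that t1 unfolding eq_def by simp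
  obtain s1 where s1: "0 < s1" "s1 < h"
    and e2: "k h - k 0 = (h - 0) * pderiv (pderiv F p) q ((x + t1 *\<^sub>R ep) + s1 *\<^sub>R eq)"
    using MVT2[OF h kd] by blast
  have "k h - k 0 = pderiv F p ((x + h *\<^sub>R eq) + t1 *\<^sub>R ep) - pderiv F p (x + t1 *\<^sub>R ep)"
    unfolding k_def by (simp add: algebra_simps)
  then have "g h - g 0 = h * h * pderiv (pderiv F p) q (x + t1 *\<^sub>R ep + s1 *\<^sub>R eq)"
    using e1 e2 by simp
  moreover have "g h - g 0 = F (x + h *\<^sub>R ep + h *\<^sub>R eq) - F (x + h *\<^sub>R eq) - F (x + h *\<^sub>R ep) + F x"
    unfolding g_def by (simp add: algebra_simps)
  ultimately show ?thesis using t1 s1 unfolding ep_def eq_def by metis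
qed

lemma schwarz:
  fixes F :: "real^'k \<Rightarrow> real"
  assumes S: "open S" "x \<in> S"
    and dF: "\<And>y. y \<in> S \<Longrightarrow> F differentiable at y"
    and dFp: "\<And>y. y \<in> S \<Longrightarrow> pderiv F p differentiable at y"
    and dFq: "\<And>y. y \<in> S \<Longrightarrow> pderiv F q differentiable at y"
    and cp: "isCont (pderiv (pderiv F p) q) x"
    and cq: "isCont (pderiv (pderiv F q) p) x"
  shows "pderiv (pderiv F p) q x = pderiv (pderiv F q) p x"
proof (rule ccontr)
  let ?P = "pderiv (pderiv F p) q" and ?Q = "pderiv (pderiv F q) p"
  assume ne: "?P x \<noteq> ?Q x"
  define d where "d = \<bar>?P x - ?Q x\<bar>"
  have d: "d > 0" using ne unfolding d_def by simp
  obtain d1 where d1: "d1 > 0" "\<And>y. dist y x < d1 \<Longrightarrow> dist (?P y) (?P x) < d/2"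
    using cp[unfolded continuous_at_eps_delta] d by (meson half_gt_zero)
  obtain d2 where d2: "d2 > 0" "\<And>y. dist y x < d2 \<Longrightarrow> dist (?Q y) (?Q x) < d/2"
    using cq[unfolded continuous_at_eps_delta] d by (meson half_gt_zero)
  obtain r where r: "r > 0" "ball x r \<subseteq> S" using S open_contains_ball by blast
  define h where "h = min r (min d1 d2) / 3"
  have h: "h > 0" using r d1 d2 unfolding h_def by simp
  have near: "dist (x + s *\<^sub>R axis i 1 + t *\<^sub>R axis j 1) x < min r (min d1 d2)"
    if "0 \<le> s" "s \<le> h" "0 \<le> t" "t \<le> h" for s t and i j :: 'k
  proof -
    have "dist (x + s *\<^sub>R axis i 1 + t *\<^sub>R axis j 1) x = norm (s *\<^sub>R axis i (1::real) + t *\<^sub>R axis j 1)"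
      by (simp add: dist_norm)
    also have "\<dots> \<le> norm (s *\<^sub>R axis i (1::real)) + norm (t *\<^sub>R axis j (1::real))" by (rule norm_triangle_ineq)
    also have "\<dots> = s + t" using that by simp
    also have "\<dots> < min r (min d1 d2)" using that h unfolding h_def by linarith
    finally show ?thesis .
  qed
  have boxS: "x + s *\<^sub>R axis i 1 + t *\<^sub>R axis j 1 \<in> S"
    if "0 \<le> s" "s \<le> h" "0 \<le> t" "t \<le> h" for s t and i j :: 'k
    using near[OF that, of i j] r by (auto simp: dist_commute)
  obtain s1 t1 where st1: "0 < s1" "s1 < h" "0 < t1" "t1 < h"
    and e1: "F (x + h *\<^sub>R axis p 1 + h *\<^sub>R axis q 1) - F (x + h *\<^sub>R axis q 1) - F (x + h *\<^sub>R axis p 1) + F x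
       = h * h * ?P (x + s1 *\<^sub>R axis p 1 + t1 *\<^sub>R axis q 1)"
    using schwarz_aux[OF h boxS dF dFp] by blast
  obtain s2 t2 where st2: "0 < s2" "s2 < h" "0 < t2" "t2 < h"
    and e2: "F (x + h *\<^sub>R axis q 1 + h *\<^sub>R axis p 1) - F (x + h *\<^sub>R axis p 1) - F (x + h *\<^sub>R axis q 1) + F x
       = h * h * ?Q (x + s2 *\<^sub>R axis q 1 + t2 *\<^sub>R axis p 1)"
    using schwarz_aux[OF h boxS dF dFq] by blast
  have sw: "x + h *\<^sub>R axis q 1 + h *\<^sub>R axis p 1 = x + h *\<^sub>R axis p (1::real) + h *\<^sub>R axis q 1"
    by (simp add: algebra_simps)
  have "h * h * ?P (x + s1 *\<^sub>R axis p 1 + t1 *\<^sub>R axis q 1) = h * h * ?Q (x + s2 *\<^sub>R axis q 1 + t2 *\<^sub>R axis p 1)"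
    using e1 e2[unfolded sw] by linarith
  then have eqPQ: "?P (x + s1 *\<^sub>R axis p 1 + t1 *\<^sub>R axis q 1) = ?Q (x + s2 *\<^sub>R axis q 1 + t2 *\<^sub>R axis p 1)"
    using h by simp
  have a1: "dist (?P (x + s1 *\<^sub>R axis p 1 + t1 *\<^sub>R axis q 1)) (?P x) < d/2"
    using d1(2) near[of s1 t1 p q] st1 by simp
  have a2: "dist (?Q (x + s2 *\<^sub>R axis q 1 + t2 *\<^sub>R axis p 1)) (?Q x) < d/2"
    using d2(2) near[of s2 t2 q p] st2 by simp
  have tri: "\<And>X P Q :: real. \<bar>X - P\<bar> < \<bar>P - Q\<bar> / 2 \<Longrightarrow> \<bar>X - Q\<bar> < \<bar>P - Q\<bar> / 2 \<Longrightarrow> False"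
    by (simp add: abs_if split: if_splits)
  show False using a1 a2 eqPQ tri unfolding d_def dist_real_def by metis
qed

theorem theorem2:
  fixes \<Theta> :: "(real^'n) set" and \<psi> :: "real^'n \<Rightarrow> real" and \<phi> :: "real^'n \<Rightarrow> real"
    and A :: "real^'m^'n" and b :: "real^'n" and U :: "(real^'m) set"
    and \<theta>q :: "real^'n"
    and Gam GamD :: "real^'m \<Rightarrow> 'm \<Rightarrow> 'm \<Rightarrow> 'm \<Rightarrow> real"
    and f :: "real^'m \<Rightarrow> real" and G :: "real^'m \<Rightarrow> real^'m^'m"
  assumes open_Theta: "open \<Theta>"
    and psi_smooth: "smooth_on \<Theta> \<psi>"
    and psi_strict_convex: "strictly_convex_on \<Theta> \<psi>"
    and metric_pos: "\<forall>\<theta>\<in>\<Theta>. pos_def (hess \<psi> \<theta>)"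
    and legendre: "\<forall>\<theta>\<in>\<Theta>. \<psi> \<theta> + \<phi> (coord_grad \<psi> \<theta>)
                        = (\<Sum>i\<in>UNIV. \<theta> $ i * coord_grad \<psi> \<theta> $ i)"
    and rankA: "rank A = CARD('m)"
    and open_U: "open U"
    and S_in: "\<forall>u\<in>U. A *v u + b \<in> \<Theta>"
    and q_in: "\<theta>q \<in> \<Theta>"
    and q_notin_S: "\<theta>q \<notin> (\<lambda>u. A *v u + b) ` U"
    and f_def: "\<forall>u. f u = \<psi> (A *v u + b) + \<phi> (coord_grad \<psi> \<theta>q)
                       - (\<Sum>i\<in>UNIV. (A *v u + b) $ i * coord_grad \<psi> \<theta>q $ i)"
    and G_def: "\<forall>u. G u = transpose A ** hess \<psi> (A *v u + b) ** A"
    and u_affine: "\<forall>u\<in>U. \<forall>i j k. Gam u i j k = 0"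
    and dual: "\<forall>u\<in>U. \<forall>i j k. pderiv (\<lambda>v. G v $ j $ k) i u
                 = (\<Sum>l\<in>UNIV. Gam u i j l * G u $ l $ k) + (\<Sum>l\<in>UNIV. GamD u i k l * G u $ j $ l)"
  shows "\<forall>u\<in>U.
           (\<exists>!\<beta>. dual_newton_eq G (coord_grad f) GamD u \<beta>) \<and>
           (\<forall>\<beta>. dual_newton_eq G (coord_grad f) GamD u \<beta> \<longrightarrow>
                 dual_newton_update Gam u \<beta> = nat_grad_update G (coord_grad f) 1 u \<and>
                 nat_grad_update G (coord_grad f) 1 u = u - matrix_inv (G u) *v coord_grad f u)"
proof
  fix u assume uU: "u \<in> U"
  define \<theta> where "\<theta> = A *v u + b"
  define c where "c = coord_grad \<psi> \<theta>q"
  have \<theta>in: "\<theta> \<in> \<Theta>" using S_in uU unfolding \<theta>_def by blast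
  have sm: "\<And>ls y. y \<in> \<Theta> \<Longrightarrow> ipd ls \<psi> differentiable at y"
    using psi_smooth unfolding smooth_on_def by blast
  have d0: "\<And>y. y \<in> \<Theta> \<Longrightarrow> \<psi> differentiable at y" using sm[of _ "[]"] by simp
  have d1: "\<And>y p. y \<in> \<Theta> \<Longrightarrow> pderiv \<psi> p differentiable at y" using sm[of _ "[_]"] by simp
  have d2: "\<And>y p q. y \<in> \<Theta> \<Longrightarrow> pderiv (pderiv \<psi> p) q differentiable at y"
    using sm[of _ "[_,_]"] by simp
  have symm: "\<And>p q. pderiv (pderiv \<psi> p) q \<theta> = pderiv (pderiv \<psi> q) p \<theta>"
    by (rule schwarz[OF open_Theta \<theta>in d0 d1 d1]) (auto intro: differentiable_imp_continuous_within d2 \<theta>in)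
  define F0 where "F0 y = \<psi> y + \<phi> c - (\<Sum>i\<in>UNIV. y $ i * c $ i)" for y
  have f_eq: "f = (\<lambda>v. F0 (A *v v + b))" using f_def unfolding F0_def c_def by auto
  have F0_has: "(F0 has_derivative (\<lambda>h. \<Sum>p\<in>UNIV. h$p * (pderiv \<psi> p y - c$p))) (at y)"
    if "y \<in> \<Theta>" for y
  proof -
    have "(F0 has_derivative (\<lambda>h. (\<Sum>p\<in>UNIV. h$p * pderiv \<psi> p y) + 0 - (\<Sum>i\<in>UNIV. h$i * c$i))) (at y)"
      unfolding F0_def
      by (intro has_derivative_diff has_derivative_add grad_has d0 that has_derivative_const
          has_derivative_sum has_derivative_mult_left bounded_linear_imp_has_derivative bounded_linear_vec_nth)
    moreover have "(\<lambda>h. (\<Sum>p\<in>UNIV. h$p * pderiv \<psi> p y) + 0 - (\<Sum>i\<in>UNIV. h$i * c$i))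
       = (\<lambda>h. \<Sum>p\<in>UNIV. h$p * (pderiv \<psi> p y - c$p))"
      by (simp add: sum_subtractf algebra_simps)
    ultimately show ?thesis by simp
  qed
  define Fj where "Fj j y = (\<Sum>p\<in>UNIV. A$p$j * (pderiv \<psi> p y - c$p))" for j y
  have Fj_has: "(Fj j has_derivative (\<lambda>h. \<Sum>q\<in>UNIV. h$q * (\<Sum>p\<in>UNIV. A$p$j * pderiv (pderiv \<psi> p) q y))) (at y)"
    if "y \<in> \<Theta>" for y j
  proof -
    have "(Fj j has_derivative (\<lambda>h. \<Sum>p\<in>UNIV. A$p$j * ((\<Sum>q\<in>UNIV. h$q * pderiv (pderiv \<psi> p) q y) - 0))) (at y)"
      unfolding Fj_def
      by (intro has_derivative_sum has_derivative_mult_right has_derivative_diff grad_has d1 that has_derivative_const)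
    moreover have "(\<lambda>h. \<Sum>p\<in>UNIV. A$p$j * ((\<Sum>q\<in>UNIV. h$q * pderiv (pderiv \<psi> p) q y) - 0))
       = (\<lambda>h. \<Sum>q\<in>UNIV. h$q * (\<Sum>p\<in>UNIV. A$p$j * pderiv (pderiv \<psi> p) q y))"
    proof (rule ext)
      fix h :: "real^'n"
      let ?P = "\<lambda>p q. pderiv (pderiv \<psi> p) q y"
      have "(\<Sum>p\<in>UNIV. A$p$j * ((\<Sum>q\<in>UNIV. h$q * ?P p q) - 0))
          = (\<Sum>p\<in>UNIV. \<Sum>q\<in>UNIV. h$q * (A$p$j * ?P p q))"
        by (simp add: sum_distrib_left mult.left_commute)
      also have "\<dots> = (\<Sum>q\<in>UNIV. \<Sum>p\<in>UNIV. h$q * (A$p$j * ?P p q))"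
        by (rule sum.swap)
      also have "\<dots> = (\<Sum>q\<in>UNIV. h$q * (\<Sum>p\<in>UNIV. A$p$j * ?P p q))"
        by (simp add: sum_distrib_left)
      finally show "(\<Sum>p\<in>UNIV. A$p$j * ((\<Sum>q\<in>UNIV. h$q * ?P p q) - 0))
          = (\<Sum>q\<in>UNIV. h$q * (\<Sum>p\<in>UNIV. A$p$j * ?P p q))" .
    qed
    ultimately show ?thesis by simp
  qed
  have pf: "pderiv f j v = Fj j (A *v v + b)" if "v \<in> U" for v j
  proof -
    have "A *v v + b \<in> \<Theta>" using S_in that by blast
    then show ?thesis unfolding f_eq Fj_def by (rule affine_pderiv[OF F0_has])
  qed
  have pf_diff: "pderiv f j differentiable at u" for j
  proof -
    have "(\<lambda>v. Fj j (A *v v + b)) differentiable at u"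
      using affine_diff Fj_has[OF \<theta>in] unfolding \<theta>_def differentiable_def by blast
    then show ?thesis using local_pderiv(2)[OF open_U uU, of "pderiv f j" "\<lambda>v. Fj j (A *v v + b)"] pf by blast
  qed
  have pff: "pderiv (pderiv f j) i u = (\<Sum>q\<in>UNIV. A$q$i * (\<Sum>p\<in>UNIV. A$p$j * pderiv (pderiv \<psi> p) q \<theta>))" for i j
  proof -
    have "pderiv (pderiv f j) i u = pderiv (\<lambda>v. Fj j (A *v v + b)) i u"
      using local_pderiv(1)[OF open_U uU, of "pderiv f j" "\<lambda>v. Fj j (A *v v + b)"] pf by blast
    also have "\<dots> = (\<Sum>q\<in>UNIV. A$q$i * (\<Sum>p\<in>UNIV. A$p$j * pderiv (pderiv \<psi> p) q \<theta>))"
      using affine_pderiv[OF Fj_has[OF \<theta>in[unfolded \<theta>_def]]] unfolding \<theta>_def .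
    finally show ?thesis .
  qed
  have Gent: "G v $ j $ k = (\<Sum>q\<in>UNIV. (\<Sum>p\<in>UNIV. A$p$j * pderiv (pderiv \<psi> q) p (A *v v + b)) * A$q$k)" for v j k
    by (simp add: G_def matrix_matrix_mult_def transpose_def hess_def)
  have G_diff: "(\<lambda>v. G v $ j $ k) differentiable at u" for j k
  proof -
    have e: "(\<lambda>v. pderiv (pderiv \<psi> q) p (A *v v + b)) differentiable at u" for p q
      using affine_diff[OF d2[OF \<theta>in[unfolded \<theta>_def]]] .
    show ?thesis unfolding Gent
      by (intro differentiable_sum ballI differentiable_mult differentiable_const e) simp_all
  qed
  have Ginv: "invertible (G v)" if "v \<in> U" for v
  proof -
    have "x = 0" if "G v *v x = 0" for x
    proof (rule ccontr)
      assume x0: "x \<noteq> 0"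
      let ?H = "hess \<psi> (A *v v + b)"
      have inj: "inj ((*v) A)" using rankA full_rank_injective by blast
      have "A *v x \<noteq> 0"
      proof
        assume "A *v x = 0"
        then have "A *v x = A *v 0" by simp
        then show False using inj x0 unfolding inj_def by blast
      qed
      then have pos: "(A *v x) \<bullet> (?H *v (A *v x)) > 0"
        using metric_pos S_in \<open>v \<in> U\<close> unfolding pos_def_def by blast
      have gx: "G v *v x = transpose A *v (?H *v (A *v x))"
        by (simp add: G_def matrix_vector_mul_assoc matrix_mul_assoc)
      define y where "y = ?H *v (A *v x)"
      have "x \<bullet> (G v *v x) = x \<bullet> (transpose A *v y)" using gx unfolding y_def by simp
      also have "\<dots> = (transpose A *v y) \<bullet> x" by (rule inner_commute)
      also have "\<dots> = (y v* A) \<bullet> x" by (simp only: transpose_matrix_vector)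
      also have "\<dots> = y \<bullet> (A *v x)" by (rule dot_lmul_matrix)
      also have "\<dots> = (A *v x) \<bullet> y" by (rule inner_commute)
      finally have "x \<bullet> (G v *v x) = (A *v x) \<bullet> (?H *v (A *v x))" unfolding y_def .
      with pos that show False by simp
    qed
    then obtain B where "B ** G v = mat 1" using matrix_left_invertible_ker by blast
    then show ?thesis unfolding invertible_def using matrix_left_right_inverse by blast
  qed
  define a where "a v = matrix_inv (G v) *v coord_grad f v" for v
  have cg: "coord_grad f v $ j = (\<Sum>k\<in>UNIV. G v $ j $ k * a v $ k)" if "v \<in> U" for v j
  proof -
    have "G v *v a v = coord_grad f v"
      unfolding a_def by (simp add: matrix_vector_mul_assoc minv[OF Ginv[OF that]])
    then have "coord_grad f v $ j = (G v *v a v) $ j" by simp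
    then show ?thesis by (simp add: matrix_vector_mult_def)
  qed
  have cgf: "(\<lambda>v. coord_grad f v $ j) = pderiv f j" for j
    by (rule ext) (simp add: coord_grad_def)
  have a_diff: "(\<lambda>v. a v $ k) differentiable at u" for k
  proof -
    have cr: "a v $ k = det (\<chi> i j. if j = k then coord_grad f v $ i else G v $ i $ j) / det (G v)"
      if "v \<in> U" for v
    proof -
      have "det (G v) \<noteq> 0" using Ginv[OF that] invertible_det_nz by blast
      moreover have "G v *v a v = coord_grad f v"
        unfolding a_def by (simp add: matrix_vector_mul_assoc minv[OF Ginv[OF that]])
      ultimately have "a v = (\<chi> k. det (\<chi> i j. if j = k then coord_grad f v $ i else G v $ i $ j) / det (G v))"
        using cramer by blast
      then show ?thesis by simp
    qed
    have ent: "(\<lambda>v. (\<chi> i j. if j = k then coord_grad f v $ i else G v $ i $ j) $ i $ j) differentiable at u" for i j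
      using pf_diff[of i] G_diff[of i j] by (cases "j = k") (simp_all add: cgf)
    have "(\<lambda>v. det (\<chi> i j. if j = k then coord_grad f v $ i else G v $ i $ j) / det (G v)) differentiable at u"
      using det_diff[OF ent] det_diff[OF G_diff] Ginv[OF uU] invertible_det_nz
      by (intro differentiable_divide) auto
    then show ?thesis using local_pderiv(2)[OF open_U uU, of "\<lambda>v. a v $ k" "\<lambda>v. det (\<chi> i j. if j = k then coord_grad f v $ i else G v $ i $ j) / det (G v)"] cr by blast
  qed
  define Hs where "Hs = dual_newton_H G (coord_grad f) GamD u"
  have Hs_ent: "Hs $ i $ l = pderiv (\<lambda>v. a v $ l) i u + (\<Sum>k\<in>UNIV. a u $ k * GamD u i k l)" for i l
    unfolding Hs_def dual_newton_H_def newton_a_def a_def by simp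
  have key: "pderiv (pderiv f j) i u = (\<Sum>l\<in>UNIV. G u $ j $ l * Hs $ i $ l)" for i j
  proof -
    have "pderiv (pderiv f j) i u = pderiv (\<lambda>v. \<Sum>k\<in>UNIV. G v $ j $ k * a v $ k) i u"
      using local_pderiv(1)[OF open_U uU, of "\<lambda>v. coord_grad f v $ j" "\<lambda>v. \<Sum>k\<in>UNIV. G v $ j $ k * a v $ k" i] cg by (simp add: cgf)
    also have "\<dots> = (\<Sum>k\<in>UNIV. pderiv (\<lambda>v. G v $ j $ k) i u * a u $ k + G u $ j $ k * pderiv (\<lambda>v. a v $ k) i u)"
      by (rule pderiv_sum_mult) (auto intro: G_diff a_diff)
    also have "\<dots> = (\<Sum>k\<in>UNIV. (\<Sum>l\<in>UNIV. GamD u i k l * G u $ j $ l) * a u $ k + G u $ j $ k * pderiv (\<lambda>v. a v $ k) i u)"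
      using dual uU u_affine by simp
    also have "\<dots> = (\<Sum>k\<in>UNIV. \<Sum>l\<in>UNIV. G u $ j $ l * (a u $ k * GamD u i k l))
        + (\<Sum>k\<in>UNIV. G u $ j $ k * pderiv (\<lambda>v. a v $ k) i u)"
      by (simp add: sum.distrib sum_distrib_right sum_distrib_left mult_ac)
    also have "\<dots> = (\<Sum>l\<in>UNIV. \<Sum>k\<in>UNIV. G u $ j $ l * (a u $ k * GamD u i k l))
        + (\<Sum>l\<in>UNIV. G u $ j $ l * pderiv (\<lambda>v. a v $ l) i u)"
      by (subst sum.swap) (rule refl)
    also have "\<dots> = (\<Sum>l\<in>UNIV. G u $ j $ l * Hs $ i $ l)"
      unfolding Hs_ent
      by (simp add: sum.distrib sum_distrib_left distrib_left)
    finally show ?thesis .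
  qed
  have GG: "G u $ j $ i = pderiv (pderiv f j) i u" for i j
  proof -
    have "G u $ j $ i = (\<Sum>q\<in>UNIV. A$q$i * (\<Sum>p\<in>UNIV. A$p$j * pderiv (pderiv \<psi> q) p \<theta>))"
      unfolding Gent \<theta>_def[symmetric] by (simp only: mult.commute)
    also have "\<dots> = pderiv (pderiv f j) i u"
      unfolding pff by (simp only: symm)
    finally show ?thesis .
  qed
  have GH: "(G u ** transpose Hs) $ j $ i = G u $ j $ i" for j i
  proof -
    have "(G u ** transpose Hs) $ j $ i = (\<Sum>l\<in>UNIV. G u $ j $ l * Hs $ i $ l)"
      by (simp add: matrix_matrix_mult_def transpose_def)
    also have "\<dots> = pderiv (pderiv f j) i u" by (rule key[symmetric])
    also have "\<dots> = G u $ j $ i" by (rule GG[symmetric])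
    finally show ?thesis .
  qed
  have GH2: "G u ** transpose Hs = G u" by (simp add: vec_eq_iff GH)
  have "transpose Hs = (matrix_inv (G u) ** G u) ** transpose Hs"
    by (simp add: minv(2)[OF Ginv[OF uU]] matrix_mul_lid)
  also have "\<dots> = matrix_inv (G u) ** (G u ** transpose Hs)" by (simp add: matrix_mul_assoc)
  also have "\<dots> = mat 1" by (simp add: GH2 minv(2)[OF Ginv[OF uU]])
  finally have tH: "transpose Hs = mat 1" .
  have eqv: "dual_newton_eq G (coord_grad f) GamD u \<beta> \<longleftrightarrow> \<beta> = - a u" for \<beta>
    unfolding dual_newton_eq_def Hs_def[symmetric] tH a_def by (simp add: matrix_vector_mul_lid)
  show "(\<exists>!\<beta>. dual_newton_eq G (coord_grad f) GamD u \<beta>) \<and>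
           (\<forall>\<beta>. dual_newton_eq G (coord_grad f) GamD u \<beta> \<longrightarrow>
                 dual_newton_update Gam u \<beta> = nat_grad_update G (coord_grad f) 1 u \<and>
                 nat_grad_update G (coord_grad f) 1 u = u - matrix_inv (G u) *v coord_grad f u)"
  proof
    show "\<exists>!\<beta>. dual_newton_eq G (coord_grad f) GamD u \<beta>" unfolding eqv by simp
    show "\<forall>\<beta>. dual_newton_eq G (coord_grad f) GamD u \<beta> \<longrightarrow>
                 dual_newton_update Gam u \<beta> = nat_grad_update G (coord_grad f) 1 u \<and>
                 nat_grad_update G (coord_grad f) 1 u = u - matrix_inv (G u) *v coord_grad f u"
      unfolding eqv using u_affine uU
      by (auto simp: dual_newton_update_def nat_grad_update_def a_def vec_eq_iff)
  qed
qed

end
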